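(* Let $C$ be a smooth affine rational curve over an algebraically closed field $k$ of characteristic zero. Then the bracket width of the simple Lie algebra $\mathrm{Vec}(C)$ is at most two.
   Context: $\mathrm{Vec}(C)=H^0(C,\mathcal{T}_C)$ is the Lie algebra of algebraic vector fields on $C$. The bracket width of a Lie algebra $L$ is the supremum over $a\in[L,L]$ of the smallest number $m$ such that $a$ is a sum of $m$ brackets of elements of $L$. *)

theory Defs
  imports "HOL-Computational_Algebra.Computational_Algebra" "HOL-Library.Extended_Nat"
begin

definition frac_deriv :: "'k::field_char_0 poly fract \<Rightarrow> 'k poly fract" where
  "frac_deriv x = (case (SOME (a, b). b \<noteq> 0 \<and> x = Fract a b) of
                     (a, b) \<Rightarrow> Fract (pderiv a * b - a * pderiv b) (b ^ 2))"

(* Coordinate ring O(C) of the curve C = A^1 minus the finite set A of points: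
   k[t][1/p] with p = prod_{a in A} (t - a), inside k(t). *)
definition coord_ring :: "'k::field_char_0 set \<Rightarrow> 'k poly fract set" where
  "coord_ring A = {x. \<exists>q n. x = Fract q ((\<Prod>a\<in>A. [:-a, 1:]) ^ n)}"

(* Vec(C) = H^0(C, T_C) = O(C) * d/dt; the vector field f d/dt is represented by f.
   Lie bracket [f d/dt, g d/dt] = (f g' - f' g) d/dt. *)
definition vf_bracket :: "'k::field_char_0 poly fract \<Rightarrow> 'k poly fract \<Rightarrow> 'k poly fract" where
  "vf_bracket f g = f * frac_deriv g - frac_deriv f * g"

definition bracket_sum :: "('a \<Rightarrow> 'a \<Rightarrow> 'a::comm_monoid_add) \<Rightarrow> ('a \<times> 'a) list \<Rightarrow> 'a" where
  "bracket_sum br xs = sum_list (map (\<lambda>(u, v). br u v) xs)"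

(* Derived algebra [L,L]: finite sums of brackets (this is the linear span of the
   brackets, since c [u,v] = [c u, v]). *)
definition derived_alg :: "'a set \<Rightarrow> ('a \<Rightarrow> 'a \<Rightarrow> 'a::comm_monoid_add) \<Rightarrow> 'a set" where
  "derived_alg L br = {x. \<exists>xs. set xs \<subseteq> L \<times> L \<and> x = bracket_sum br xs}"

definition bracket_width :: "'a set \<Rightarrow> ('a \<Rightarrow> 'a \<Rightarrow> 'a::comm_monoid_add) \<Rightarrow> enat" where
  "bracket_width L br =
     (SUP a\<in>derived_alg L br.
        enat (LEAST m. \<exists>xs. length xs = m \<and> set xs \<subseteq> L \<times> L \<and> a = bracket_sum br xs))"

end

theory Submission
  imports Defs
begin

lemma pderiv_sum_gen: "pderiv (sum f S) = (\<Sum>x\<in>S. pderiv (f x))"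
  using higher_pderiv_sum[of 1 f S] by simp

lemma antideriv_exists:
  fixes P :: "'k::field_char_0 poly"
  shows "\<exists>U. pderiv U = P"
proof -
  have "pderiv (\<Sum>i\<le>degree P. monom (coeff P i / of_nat (Suc i)) (Suc i))
        = (\<Sum>i\<le>degree P. monom (coeff P i) i)"
    by (simp add: pderiv_sum_gen pderiv_monom del: of_nat_Suc)
  also have "\<dots> = P" by (rule poly_as_sum_of_monoms)
  finally show ?thesis by blast
qed

lemma frac_deriv_Fract:
  fixes a b :: "'k::field_char_0 poly"
  assumes b: "b \<noteq> 0"
  shows "frac_deriv (Fract a b) = Fract (pderiv a * b - a * pderiv b) (b ^ 2)"
proof -
  define cd where "cd = (SOME (c, d). d \<noteq> 0 \<and> Fract a b = Fract c d)"
  have ex: "\<exists>cd. (\<lambda>(c, d). d \<noteq> 0 \<and> Fract a b = Fract c d) cd"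
    using b by auto
  have "(\<lambda>(c, d). d \<noteq> 0 \<and> Fract a b = Fract c d) cd"
    unfolding cd_def by (rule someI_ex[OF ex])
  then obtain c d where cdd: "cd = (c, d)" and d: "d \<noteq> 0" and eq: "Fract a b = Fract c d"
    by (cases cd) auto
  have H: "a * d = c * b" using eq b d by (simp add: eq_fract)
  have H': "pderiv a * d + a * pderiv d = pderiv c * b + c * pderiv b"
    using arg_cong[OF H, of pderiv] by (simp add: pderiv_mult algebra_simps)
  have "(pderiv c * d - c * pderiv d) * b ^ 2 = (pderiv a * b - a * pderiv b) * d ^ 2"
  proof -
    have "(pderiv c * d - c * pderiv d) * b ^ 2 - (pderiv a * b - a * pderiv b) * d ^ 2
       = b * pderiv d * (a * d - c * b) - b * d * (pderiv a * d + a * pderiv d - (pderiv c * b + c * pderiv b))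
         + pderiv b * d * (a * d - c * b)"
      by (simp add: algebra_simps power2_eq_square)
    also have "\<dots> = 0" using H H' by simp
    finally show ?thesis by simp
  qed
  then show ?thesis
    unfolding frac_deriv_def cd_def[symmetric] cdd using b d by (simp add: eq_fract)
qed

lemma bracket_special:
  fixes P U :: "'k::field_char_0 poly"
  assumes P: "P \<noteq> 0"
  shows "vf_bracket (Fract 1 P) (Fract U P) = Fract (pderiv U) (P ^ 2)"
proof -
  have "vf_bracket (Fract 1 P) (Fract U P)
     = Fract (pderiv U * P - U * pderiv P) (P * P ^ 2) - Fract (- pderiv P * U) (P ^ 2 * P)"
    unfolding vf_bracket_def using P by (simp add: frac_deriv_Fract)
  also have "\<dots> = Fract (pderiv U * P) (P ^ 3)"
    using P by (simp add: eq_fract algebra_simps power2_eq_square power3_eq_cube)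
  also have "\<dots> = Fract (pderiv U) (P ^ 2)"
    using P by (simp add: eq_fract algebra_simps power2_eq_square power3_eq_cube)
  finally show ?thesis .
qed

definition pA :: "'k::field_char_0 set \<Rightarrow> 'k poly" where
  "pA A = (\<Prod>a\<in>A. [:-a, 1:])"

lemma pA_nz: "pA A \<noteq> 0"
  unfolding pA_def by (cases "finite A") (auto simp: prod_zero_iff)

lemma coord_ring_pA: "coord_ring A = {x. \<exists>q n. x = Fract q (pA A ^ n)}"
  unfolding coord_ring_def pA_def by simp

lemma one_bracket:
  fixes A :: "'k::field_char_0 set"
  assumes "h \<in> coord_ring A"
  shows "\<exists>f g. f \<in> coord_ring A \<and> g \<in> coord_ring A \<and> h = vf_bracket f g"
proof -
  obtain q n where h: "h = Fract q (pA A ^ n)" using assms by (auto simp: coord_ring_pA)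
  define P where "P = pA A ^ n"
  have P: "P \<noteq> 0" unfolding P_def using pA_nz[of A] by simp
  obtain U where U: "pderiv U = q * P" using antideriv_exists by blast
  have "vf_bracket (Fract 1 P) (Fract U P) = h"
    unfolding bracket_special[OF P] U h P_def[symmetric]
    using P by (simp add: eq_fract algebra_simps power2_eq_square)
  moreover have "Fract 1 P \<in> coord_ring A" "Fract U P \<in> coord_ring A"
    unfolding coord_ring_pA P_def by blast+
  ultimately show ?thesis by metis
qed

lemma cr_zero: "0 \<in> coord_ring A"
  unfolding coord_ring_pA by (rule CollectI, rule exI[of _ 0], rule exI[of _ 0]) (simp add: Zero_fract_def)

lemma cr_add:
  assumes "x \<in> coord_ring A" "y \<in> coord_ring A"
  shows "x + y \<in> coord_ring A"
proof -
  obtain q n where x: "x = Fract q (pA A ^ n)" using assms by (auto simp: coord_ring_pA)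
  obtain r m where y: "y = Fract r (pA A ^ m)" using assms by (auto simp: coord_ring_pA)
  have "x + y = Fract (q * pA A ^ m + r * pA A ^ n) (pA A ^ (n + m))"
    using pA_nz[of A] by (simp add: x y power_add)
  then show ?thesis unfolding coord_ring_pA by blast
qed

lemma cr_diff:
  assumes "x \<in> coord_ring A" "y \<in> coord_ring A"
  shows "x - y \<in> coord_ring A"
proof -
  obtain q n where x: "x = Fract q (pA A ^ n)" using assms by (auto simp: coord_ring_pA)
  obtain r m where y: "y = Fract r (pA A ^ m)" using assms by (auto simp: coord_ring_pA)
  have "x - y = Fract (q * pA A ^ m - r * pA A ^ n) (pA A ^ (n + m))"
    using pA_nz[of A] by (simp add: x y power_add)
  then show ?thesis unfolding coord_ring_pA by blast
qed

lemma cr_mult: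
  assumes "x \<in> coord_ring A" "y \<in> coord_ring A"
  shows "x * y \<in> coord_ring A"
proof -
  obtain q n where x: "x = Fract q (pA A ^ n)" using assms by (auto simp: coord_ring_pA)
  obtain r m where y: "y = Fract r (pA A ^ m)" using assms by (auto simp: coord_ring_pA)
  have "x * y = Fract (q * r) (pA A ^ (n + m))"
    by (simp add: x y power_add)
  then show ?thesis unfolding coord_ring_pA by blast
qed

lemma cr_deriv:
  assumes "x \<in> coord_ring A"
  shows "frac_deriv x \<in> coord_ring A"
proof -
  obtain q n where x: "x = Fract q (pA A ^ n)" using assms by (auto simp: coord_ring_pA)
  have "frac_deriv x = Fract (pderiv q * pA A ^ n - q * pderiv (pA A ^ n)) (pA A ^ (n * 2))"
    using pA_nz[of A] by (simp add: x frac_deriv_Fract power_mult)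
  then show ?thesis unfolding coord_ring_pA by blast
qed

lemma cr_bracket:
  assumes "x \<in> coord_ring A" "y \<in> coord_ring A"
  shows "vf_bracket x y \<in> coord_ring A"
  unfolding vf_bracket_def using assms by (intro cr_diff cr_mult cr_deriv)

lemma cr_bracket_sum:
  assumes "set xs \<subseteq> coord_ring A \<times> coord_ring A"
  shows "bracket_sum vf_bracket xs \<in> coord_ring A"
  using assms
proof (induction xs)
  case Nil then show ?case by (simp add: bracket_sum_def cr_zero)
next
  case (Cons x xs)
  then show ?case
    by (cases x) (auto simp: bracket_sum_def intro!: cr_add cr_bracket)
qed

theorem proposition3p1:
  fixes A :: "'k::{alg_closed_field, field_char_0} set"
  assumes "finite A"
  shows "bracket_width (coord_ring A) vf_bracket \<le> 2"
  unfolding bracket_width_def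
proof (rule SUP_least)
  fix a assume "a \<in> derived_alg (coord_ring A) vf_bracket"
  then have "a \<in> coord_ring A"
    unfolding derived_alg_def using cr_bracket_sum by blast
  then obtain f g where fg: "f \<in> coord_ring A" "g \<in> coord_ring A" "a = vf_bracket f g"
    using one_bracket by blast
  have "(LEAST m. \<exists>xs. length xs = m \<and> set xs \<subseteq> coord_ring A \<times> coord_ring A
           \<and> a = bracket_sum vf_bracket xs) \<le> 1"
    by (rule Least_le, rule exI[of _ "[(f, g)]"]) (simp add: fg bracket_sum_def)
  then show "enat (LEAST m. \<exists>xs. length xs = m \<and> set xs \<subseteq> coord_ring A \<times> coord_ring A
           \<and> a = bracket_sum vf_bracket xs) \<le> 2"
    by (simp add: numeral_eq_enat)
qed

end
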